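(* Fix one of the types I–V with data $J$, $(\phi_j)$, $(n_j)$ as in the context, let $H$ be continuous on $\mathbb{R}$, and fix an admissible index $i$ ($i=0$ for Type I; $i\in J\setminus\{\max J\}$ for Types II–V). Let $\mathbf{x}(s)$ be a solution of $$\mathbf{x}''(s)^\perp\cdot\mathbf{x}'(s)+\sum_{j\in J}\frac{n_j\,\mathbf{e}(\phi_j)\cdot\mathbf{x}'(s)}{\mathbf{e}(\phi_j)^\perp\cdot\mathbf{x}(s)}=(n-1)H(s),\qquad \|\mathbf{x}'(s)\|^2=1,$$ for $s$ near $0$, $s\neq0$ on one side of $0$, taking values in the sector $S_i$, and assume $$\lim_{s\to0}\mathbf{e}(\phi_i)^\perp\cdot\mathbf{x}(s)=0,\qquad \lim_{s\to0}\mathbf{x}(s)=\mathbf{x}_0\neq\mathbf{0}.$$ Then the limit of $\mathbf{x}'(s)$ as $s\to0$ exists and $\lim_{s\to0}\mathbf{e}(\phi_i)\cdot\mathbf{x}'(s)=0$.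
   Context: For $\mathbf{a}=(a,b)\in\mathbb{R}^2$ write $\mathbf{a}^\perp=(-b,a)$; $\mathbf{e}(\phi)=(\cos\phi,\sin\phi)$, $\mathbf{e}(\phi)^\perp=(-\sin\phi,\cos\phi)$. Type data ($J$ a finite set of consecutive integers, $\sum_{j}n_j=n-2$): Type I: $J=\{0\}$, $\phi_0=0$, $n_0=n-2$, $n\ge3$. Type II: $J=\{0,1\}$, $\phi_0=0$, $\phi_1=\pi/2$, $n_0=m$, $n_1=\ell$ ($n=\ell+m+2$, $\ell,m\in\mathbb{N}$). Type III: $J=\{-1,0,1\}$, $\phi_j=j\pi/3$, $n_j\equiv c$ with $c\in\{1,2,4,8\}$ ($n=5,8,14,26$). Type IV: $J=\{-1,0,1,2\}$, $\phi_j=j\pi/4$, $n_{\pm1}=\ell$, $n_0=n_2=k$, $(k,\ell)\in\{(2,2),(5,4),(9,6),(m-2,1),(2m-3,2),(4m-5,4)\}$. Type V: $J=\{-2,\dots,3\}$, $\phi_j=j\pi/6$, $n_j\equiv c$ with $c\in\{1,2\}$. Sector: for Type I, $S_0=\{(x,y):y>0\}$; for Types II–V, $S_i=\{\mathbf{x}\in\mathbb{R}^2:\mathbf{e}(\phi_{i+1})^\perp\cdot\mathbf{x}<0<\mathbf{e}(\phi_i)^\perp\cdot\mathbf{x}\}$. *)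

theory Defs
  imports "HOL-Analysis.Analysis"
begin

definition perp :: "real \<times> real \<Rightarrow> real \<times> real" where
  "perp v = (- snd v, fst v)"

definition evec :: "real \<Rightarrow> real \<times> real" where
  "evec \<phi> = (cos \<phi>, sin \<phi>)"

text \<open>Type data: t \<in> {1..5} is the type (I..V), J the index set, phi the angles,
  nn the multiplicities n_j, n the dimension parameter.\<close>

definition type_data :: "nat \<Rightarrow> int set \<Rightarrow> (int \<Rightarrow> real) \<Rightarrow> (int \<Rightarrow> nat) \<Rightarrow> nat \<Rightarrow> bool" where
  "type_data t J phi nn n \<longleftrightarrow>
     (t = 1 \<and> J = {0} \<and> phi 0 = 0 \<and> n \<ge> 3 \<and> nn 0 = n - 2)
   \<or> (t = 2 \<and> J = {0, 1} \<and> phi 0 = 0 \<and> phi 1 = pi / 2 \<and>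
        (\<exists>m l. m \<ge> 1 \<and> l \<ge> 1 \<and> nn 0 = m \<and> nn 1 = l \<and> n = l + m + 2))
   \<or> (t = 3 \<and> J = {-1, 0, 1} \<and> (\<forall>j\<in>J. phi j = real_of_int j * pi / 3) \<and>
        (\<exists>c\<in>{1, 2, 4, 8}. (\<forall>j\<in>J. nn j = c) \<and> n = 3 * c + 2))
   \<or> (t = 4 \<and> J = {-1, 0, 1, 2} \<and> (\<forall>j\<in>J. phi j = real_of_int j * pi / 4) \<and>
        (\<exists>k l. nn (-1) = l \<and> nn 1 = l \<and> nn 0 = k \<and> nn 2 = k \<and> k \<ge> 1 \<and>
           ((k, l) \<in> {(2, 2), (5, 4), (9, 6)} \<or>
            (\<exists>m::int. (int k = m - 2 \<and> l = 1) \<or> (int k = 2 * m - 3 \<and> l = 2)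
                      \<or> (int k = 4 * m - 5 \<and> l = 4))) \<and>
           n = 2 * k + 2 * l + 2))
   \<or> (t = 5 \<and> J = {-2..3} \<and> (\<forall>j\<in>J. phi j = real_of_int j * pi / 6) \<and>
        (\<exists>c\<in>{1, 2}. (\<forall>j\<in>J. nn j = c) \<and> n = 6 * c + 2))"

definition admissible :: "nat \<Rightarrow> int set \<Rightarrow> int \<Rightarrow> bool" where
  "admissible t J i \<longleftrightarrow> (if t = 1 then i = 0 else i \<in> J - {Max J})"

definition sector :: "nat \<Rightarrow> (int \<Rightarrow> real) \<Rightarrow> int \<Rightarrow> (real \<times> real) set" where
  "sector t phi i =
     (if t = 1 then {p. snd p > 0}
      else {p. perp (evec (phi (i + 1))) \<bullet> p < 0 \<and> 0 < perp (evec (phi i)) \<bullet> p})"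

end

theory Submission
  imports Defs
begin


lemma core_lemma:
  fixes u w w' :: "real \<Rightarrow> real" and k M \<delta> :: real
  assumes d0: "\<delta> > 0" and k0: "k > 0" and M0: "M \<ge> 0"
  and du: "\<And>s. 0<s \<Longrightarrow> s<\<delta> \<Longrightarrow> (u has_real_derivative w s) (at s)"
  and dw: "\<And>s. 0<s \<Longrightarrow> s<\<delta> \<Longrightarrow> (w has_real_derivative w' s) (at s)"
  and pos: "\<And>s. 0<s \<Longrightarrow> s<\<delta> \<Longrightarrow> u s > 0"
  and wb: "\<And>s. 0<s \<Longrightarrow> s<\<delta> \<Longrightarrow> \<bar>w s\<bar> \<le> 1"
  and ineq: "\<And>s. 0<s \<Longrightarrow> s<\<delta> \<Longrightarrow> w' s \<ge> k*(1-(w s)^2)/u s - M"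
  and lim: "(u \<longlongrightarrow> 0) (at_right 0)"
  and s1: "0<s1" "s1<\<delta>"
  shows "w s1 \<ge> 1 - M* s1"
proof -
  define p where "p s = w s + M* s" for s
  have dp: "(p has_real_derivative w' s + M) (at s)" if "0<s" "s<\<delta>" for s
    unfolding p_def using dw[OF that] by (auto intro!: derivative_eq_intros)
  have pnn: "w' s + M \<ge> 0" if "0<s" "s<\<delta>" for s
  proof -
    have "(w s)^2 \<le> 1" using wb[OF that] by (simp add: abs_square_le_1)
    hence "k*(1-(w s)^2)/u s \<ge> 0" using k0 pos[OF that] by simp
    thus ?thesis using ineq[OF that] by linarith
  qed
  have gen_mono: "f a \<le> f b" if "0<a" "a\<le>b" "b<\<delta>"
     and "\<And>s. a<s \<Longrightarrow> s<b \<Longrightarrow> (f has_real_derivative f' s) (at s) \<and> f' s \<ge> 0"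
     and "\<And>s. a\<le>s \<Longrightarrow> s\<le>b \<Longrightarrow> isCont f s" for f f' :: "real \<Rightarrow> real" and a b
    apply (rule DERIV_nonneg_imp_increasing_open[OF \<open>a\<le>b\<close>])
    using that(4) apply blast
    using that(5) by (simp add: continuous_at_imp_continuous_on)
  have mono: "p a \<le> p b" if "0<a" "a\<le>b" "b<\<delta>" for a b
    apply (rule gen_mono[OF that, where f'="\<lambda>s. w' s + M"])
    using dp pnn that apply auto[1]
    using dp that by (meson DERIV_isCont less_le_trans le_less_trans)
  have limlemma: "a \<le> b" if "0<s" "\<And>e. 0<e \<Longrightarrow> e<s \<Longrightarrow> a \<le> u e + b" for s a b
  proof (rule tendsto_le[of "at_right (0::real)" "\<lambda>e. u e + b" b "\<lambda>_. a" a])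
    show "((\<lambda>e. u e + b) \<longlongrightarrow> b) (at_right 0)" using tendsto_add[OF lim tendsto_const[of b]] by simp
    show "eventually (\<lambda>e. a \<le> u e + b) (at_right 0)"
      unfolding eventually_at_right_field using that by auto
  qed auto
  have mvt: "\<exists>z. e<z \<and> z<s \<and> u s - u e = (s-e) * w z" if "0<e" "e<s" "s<\<delta>" for e s
    apply (rule MVT2[OF \<open>e<s\<close>]) using du that by auto
  have ule: "u s \<le> s" if "0<s" "s<\<delta>" for s
  proof (rule limlemma[OF \<open>0<s\<close>])
    fix e assume "0<e" "e<s"
    obtain z where z: "e<z" "z<s" "u s - u e = (s-e) * w z" using mvt[OF \<open>0<e\<close> \<open>e<s\<close> \<open>s<\<delta>\<close>] by blast
    have "w z \<le> 1" using wb[of z] z \<open>0<e\<close> \<open>s<\<delta>\<close> by simp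
    hence "(s-e) * w z \<le> s-e" using mult_left_mono[OF \<open>w z \<le> 1\<close>, of "s-e"] \<open>e<s\<close> by simp
    thus "u s \<le> u e + s" using z \<open>0<e\<close> by linarith
  qed
  have ppos: "p s > 0" if "0<s" "s<\<delta>" for s
  proof (rule ccontr)
    assume "\<not> p s > 0"
    have "u s \<le> 0"
    proof (rule limlemma[OF \<open>0<s\<close>])
      fix e assume "0<e" "e<s"
      obtain z where z: "e<z" "z<s" "u s - u e = (s-e) * w z" using mvt[OF \<open>0<e\<close> \<open>e<s\<close> \<open>s<\<delta>\<close>] by blast
      have "p z \<le> p s" using mono[of z s] z \<open>0<e\<close> that by auto
      hence "w z \<le> 0" using \<open>\<not> p s > 0\<close> M0 z \<open>0<e\<close> unfolding p_def
        by (smt (verit) mult_nonneg_nonneg)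
      hence "(s-e) * w z \<le> 0" using z by (simp add: mult_nonneg_nonpos)
      thus "u s \<le> u e + 0" using z by linarith
    qed
    thus False using pos that by force
  qed
  show "w s1 \<ge> 1 - M* s1"
  proof (rule ccontr)
    assume "\<not> w s1 \<ge> 1 - M* s1"
    hence ps1: "p s1 < 1" unfolding p_def by simp
    define s2 where "s2 = min s1 (1/(M+1))"
    have s2: "0<s2" "s2 \<le> s1" "s2<\<delta>" using s1 M0 unfolding s2_def by auto
    have Ms2: "M* s2 < 1"
    proof -
      have "M* s2 \<le> M*(1/(M+1))" using M0 unfolding s2_def by (intro mult_left_mono) auto
      also have "\<dots> < 1" using M0 by (simp add: field_simps)
      finally show ?thesis .
    qed
    have ps2: "p s2 < 1" using mono[of s2 s1] s2 s1 ps1 by auto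
    define \<beta> where "\<beta> = max (p s2) (M* s2)"
    have b1: "\<beta> < 1" "\<beta> > 0" using ps2 Ms2 ppos[OF s2(1) s2(3)] unfolding \<beta>_def by auto
    define \<gamma> where "\<gamma> = 1 - \<beta>^2"
    have "\<beta>*\<beta> < 1*1" using b1 by (intro mult_strict_mono) auto
    hence g0: "\<gamma> > 0" unfolding \<gamma>_def by (simp add: power2_eq_square)
    have dq: "w' t + M \<ge> k*\<gamma>/t" if "0<t" "t<s2" for t
    proof -
      have t: "0<t" "t<\<delta>" using that s2 by auto
      have "p t \<le> p s2" using mono[of t s2] that s2 by auto
      hence "w t \<le> \<beta>" unfolding p_def \<beta>_def using M0 t by (smt (verit) mult_nonneg_nonneg)
      moreover have "w t \<ge> -\<beta>"
      proof -
        have "p t > 0" using ppos t by auto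
        hence "w t > - M*t" unfolding p_def by simp
        moreover have "M*t \<le> M* s2" using M0 that by (intro mult_left_mono) auto
        ultimately show ?thesis unfolding \<beta>_def by auto
      qed
      ultimately have "\<bar>w t\<bar> \<le> \<beta>" by auto
      hence "(w t)^2 \<le> \<beta>^2" by (metis abs_le_square_iff abs_of_pos b1(2))
      hence g: "1 - (w t)^2 \<ge> \<gamma>" unfolding \<gamma>_def by simp
      have ut: "0 < u t" "u t \<le> t" using pos t ule t by auto
      have "k*\<gamma>/t \<le> k*\<gamma>/u t" using ut g0 k0 by (intro divide_left_mono) auto
      also have "\<dots> \<le> k*(1-(w t)^2)/u t" using ut k0 g
        by (intro divide_right_mono mult_left_mono) auto
      finally show ?thesis using ineq[OF t] by linarith
    qed
    define e where "e = s2 * exp (-2/(k*\<gamma>))"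
    have e: "0<e" "e<s2" using s2 g0 k0 unfolding e_def by auto
    define q where "q t = p t - k*\<gamma>*ln t" for t
    have "q e \<le> q s2"
    proof (rule gen_mono[where f=q and a=e and b=s2 and f'="\<lambda>t. w' t + M - k*\<gamma>/t"])
      show "0<e" "e\<le>s2" "s2<\<delta>" using e s2 by auto
      fix t assume t: "e<t" "t<s2"
      hence "0<t" using e by auto
      show "(q has_real_derivative w' t + M - k*\<gamma>/t) (at t) \<and> 0 \<le> w' t + M - k*\<gamma>/t"
        unfolding q_def using dp[of t] dq[of t] t \<open>0<t\<close> s2
        by (auto intro!: derivative_eq_intros)
    next
      fix t assume t: "e\<le>t" "t\<le>s2"
      hence "0<t" using e by auto
      have "isCont p t" using dp[of t] t \<open>0<t\<close> s2 DERIV_isCont by auto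
      thus "isCont q t" unfolding q_def using \<open>0<t\<close> by (auto intro!: continuous_intros)
    qed
    hence "k*\<gamma>*(ln s2 - ln e) \<le> p s2 - p e" unfolding q_def by (simp add: algebra_simps)
    moreover have "ln s2 - ln e = 2/(k*\<gamma>)" unfolding e_def using s2 by (simp add: ln_mult)
    ultimately have "2 \<le> p s2 - p e" using k0 g0 by simp
    moreover have "p e > 0" using ppos e s2 by auto
    ultimately show False using ps2 by linarith
  qed
qed

lemma sin_frac:
  fixes m d :: int
  assumes "0 < \<bar>m\<bar>" "\<bar>m\<bar> < d"
  shows "sin (of_int m * pi / of_int d) \<noteq> 0"
proof
  assume "sin (of_int m * pi / of_int d) = 0"
  then obtain j :: int where j: "of_int m * pi / of_int d = of_int j * pi"
    by (auto simp: sin_zero_iff_int2)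
  have d0: "d > 0" using assms by linarith
  hence "of_int m * pi = of_int j * pi * of_int d" using j by (simp add: field_simps)
  hence "real_of_int m = of_int j * of_int d" by simp
  hence m: "m = j * d" by (metis of_int_eq_iff of_int_mult)
  show False
  proof (cases "j = 0")
    case True then show False using m assms by simp
  next
    case False
    hence "\<bar>j\<bar> \<ge> 1" by linarith
    hence "\<bar>m\<bar> \<ge> d" using m d0 by (simp add: abs_mult)
    thus False using assms by linarith
  qed
qed

lemma sin_diff_ne:
  fixes a b d :: int
  assumes "phi a = of_int a * pi / of_int d" "phi b = of_int b * pi / of_int d"
    "a \<noteq> b" "\<bar>a - b\<bar> < d"
  shows "sin (phi a - phi b) \<noteq> 0"
proof -
  have "phi a - phi b = of_int (a - b) * pi / of_int d" using assms(1,2) by (simp add: left_diff_distrib diff_divide_distrib)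
  thus ?thesis using sin_frac[of "a-b" d] assms(3,4) by simp
qed

lemma types_facts:
  assumes td: "type_data t J phi nn n" and ad: "admissible t J i"
  shows "finite J \<and> i \<in> J \<and> nn i \<ge> 1 \<and> (\<forall>j\<in>J. j \<noteq> i \<longrightarrow> sin (phi i - phi j) \<noteq> 0)"
  using td unfolding type_data_def
proof (elim disjE conjE)
  assume h: "t = 1" "J = {0}" "phi 0 = 0" "3 \<le> n" "nn 0 = n - 2"
  then show ?thesis using ad unfolding admissible_def by auto
next
  assume h: "t = 2" "J = {0, 1}" "phi 0 = 0" "phi 1 = pi / 2"
    "\<exists>m l. 1 \<le> m \<and> 1 \<le> l \<and> nn 0 = m \<and> nn 1 = l \<and> n = l + m + 2"
  have i: "i \<in> J" using ad h(1,2) unfolding admissible_def by auto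
  have s1: "sin (phi 1) = 1" by (simp only: h(4) sin_pi_half)
  show ?thesis using h i s1 by auto
next
  assume h: "t = 3" "J = {-1, 0, 1}" "\<forall>j\<in>J. phi j = real_of_int j * pi / 3"
    "\<exists>c\<in>{1, 2, 4, 8}. (\<forall>j\<in>J. nn j = c) \<and> n = 3 * c + 2"
  have i: "i \<in> J" using ad h(1,2) unfolding admissible_def by auto
  have "\<forall>j\<in>J. j \<noteq> i \<longrightarrow> sin (phi i - phi j) \<noteq> 0"
  proof (intro ballI impI)
    fix j assume "j \<in> J" "j \<noteq> i"
    show "sin (phi i - phi j) \<noteq> 0"
      apply (rule sin_diff_ne[where d=3])
      using h(2,3) \<open>j \<in> J\<close> i \<open>j \<noteq> i\<close> by auto
  qed
  moreover have "nn i \<ge> 1"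
  proof -
    obtain c where "c \<in> {1,2,4,8}" "\<forall>j\<in>J. nn j = c" using h(4) by auto
    thus ?thesis using i by auto
  qed
  moreover have "finite J" using h(2) by simp
  ultimately show ?thesis using i by blast
next
  assume h: "t = 4" "J = {-1, 0, 1, 2}" "\<forall>j\<in>J. phi j = real_of_int j * pi / 4"
    "\<exists>k l. nn (- 1) = l \<and> nn 1 = l \<and> nn 0 = k \<and> nn 2 = k \<and> 1 \<le> k \<and>
           ((k, l) \<in> {(2, 2), (5, 4), (9, 6)} \<or>
            (\<exists>m. int k = m - 2 \<and> l = 1 \<or> int k = 2 * m - 3 \<and> l = 2 \<or> int k = 4 * m - 5 \<and> l = 4)) \<and>
           n = 2 * k + 2 * l + 2"
  have i: "i \<in> J" using ad h(1,2) unfolding admissible_def by auto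
  have "\<forall>j\<in>J. j \<noteq> i \<longrightarrow> sin (phi i - phi j) \<noteq> 0"
  proof (intro ballI impI)
    fix j assume "j \<in> J" "j \<noteq> i"
    show "sin (phi i - phi j) \<noteq> 0"
      apply (rule sin_diff_ne[where d=4])
      using h(2,3) \<open>j \<in> J\<close> i \<open>j \<noteq> i\<close> by auto
  qed
  moreover have "nn i \<ge> 1"
  proof -
    obtain k l where kl: "nn (- 1) = l" "nn 1 = l" "nn 0 = k" "nn 2 = k" "1 \<le> k"
      "(k, l) \<in> {(2, 2), (5, 4), (9, 6)} \<or>
            (\<exists>m. int k = m - 2 \<and> l = 1 \<or> int k = 2 * m - 3 \<and> l = 2 \<or> int k = 4 * m - 5 \<and> l = 4)"
      using h(4) by blast
    have "l \<ge> 1" using kl(6) by auto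
    have "i = -1 \<or> i = 0 \<or> i = 1 \<or> i = 2" using i h(2) by auto
    thus ?thesis using kl \<open>l \<ge> 1\<close> by auto
  qed
  moreover have "finite J" using h(2) by simp
  ultimately show ?thesis using i by blast
next
  assume h: "t = 5" "J = {-2..3}" "\<forall>j\<in>J. phi j = real_of_int j * pi / 6"
    "\<exists>c\<in>{1, 2}. (\<forall>j\<in>J. nn j = c) \<and> n = 6 * c + 2"
  have i: "i \<in> J" using ad h(1,2) unfolding admissible_def by auto
  have "\<forall>j\<in>J. j \<noteq> i \<longrightarrow> sin (phi i - phi j) \<noteq> 0"
  proof (intro ballI impI)
    fix j assume "j \<in> J" "j \<noteq> i"
    show "sin (phi i - phi j) \<noteq> 0"
      apply (rule sin_diff_ne[where d=6])
      using h(2,3) \<open>j \<in> J\<close> i \<open>j \<noteq> i\<close> by auto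
  qed
  moreover have "nn i \<ge> 1"
  proof -
    obtain c where "c \<in> {1,2,4,8}" "\<forall>j\<in>J. nn j = c" using h(4) by auto
    thus ?thesis using i by auto
  qed
  moreover have "finite J" using h(2) by simp
  ultimately show ?thesis using i by blast
qed

lemma inner_vd:
  assumes "(x has_vector_derivative v) (at s)"
  shows "((\<lambda>s. a \<bullet> x s) has_real_derivative a \<bullet> v) (at s)"
proof -
  have "(x has_derivative (\<lambda>h. h *\<^sub>R v)) (at s)" using assms by (simp add: has_vector_derivative_def)
  hence "((\<lambda>s. a \<bullet> x s) has_derivative (\<lambda>h. a \<bullet> (h *\<^sub>R v))) (at s)"
    by (rule has_derivative_inner_right)
  hence "((\<lambda>s. a \<bullet> x s) has_derivative (\<lambda>h. (a \<bullet> v) * h)) (at s)"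
    by (simp add: mult.commute)
  thus ?thesis by (simp add: has_field_derivative_def)
qed

lemma self_inner_deriv:
  assumes "(x has_vector_derivative v) (at s)"
  shows "((\<lambda>s. x s \<bullet> x s) has_real_derivative 2 * (x s \<bullet> v)) (at s)"
proof -
  have D: "(x has_derivative (\<lambda>h. h *\<^sub>R v)) (at s)" using assms by (simp add: has_vector_derivative_def)
  have "((\<lambda>t. x t \<bullet> x t) has_derivative (\<lambda>h. x s \<bullet> (h *\<^sub>R v) + (h *\<^sub>R v) \<bullet> x s)) (at s)"
    by (rule has_derivative_inner[OF D D])
  hence "((\<lambda>t. x t \<bullet> x t) has_derivative (\<lambda>h. (2 * (x s \<bullet> v)) * h)) (at s)"
    by (simp add: inner_commute algebra_simps)
  thus ?thesis by (simp add: has_field_derivative_def)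
qed

lemma perp_evec_inner: "perp (evec \<psi>) \<bullet> evec \<phi> = sin (\<phi> - \<psi>)"
  by (simp add: perp_def evec_def inner_Pair sin_diff algebra_simps)

lemma decomp: "v = (evec \<phi> \<bullet> v) *\<^sub>R evec \<phi> + (perp (evec \<phi>) \<bullet> v) *\<^sub>R perp (evec \<phi>)"
proof (cases v)
  case (Pair a b)
  have s: "(cos \<phi>)^2 + (sin \<phi>)^2 = 1" by simp
  have "a = (cos \<phi> * a + sin \<phi> * b) * cos \<phi> - (cos \<phi> * b - sin \<phi> * a) * sin \<phi>"
    using s by algebra
  moreover have "b = (cos \<phi> * a + sin \<phi> * b) * sin \<phi> + (cos \<phi> * b - sin \<phi> * a) * cos \<phi>"
    using s by algebra
  ultimately show ?thesis using Pair by (simp add: perp_def evec_def inner_Pair algebra_simps)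
qed

lemma normP: "(norm (a::real, b::real))^2 = a^2 + b^2"
  by (simp add: norm_Pair)

lemma normsq: "(evec \<phi> \<bullet> v)^2 + (perp (evec \<phi>) \<bullet> v)^2 = (norm v)^2"
proof (cases v)
  case (Pair a b)
  have s: "(cos \<phi>)^2 + (sin \<phi>)^2 = 1" by simp
  have "(cos \<phi> * a + sin \<phi> * b)^2 + (cos \<phi> * b - sin \<phi> * a)^2 = a^2 + b^2"
    using s by algebra
  thus ?thesis using Pair normP[of a b] by (simp add: perp_def evec_def inner_Pair algebra_simps)
qed

lemma inner_bound: "\<bar>evec \<phi> \<bullet> v\<bar> \<le> norm v"
proof -
  have "\<bar>evec \<phi> \<bullet> v\<bar>^2 \<le> (norm v)^2" using normsq[of \<phi> v]
    by (metis power2_abs le_add_same_cancel1 zero_le_power2)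
  thus ?thesis by (rule power2_le_imp_le) simp
qed

lemma key_identity:
  assumes "(norm v)^2 = 1" "v \<bullet> a = 0"
  shows "perp (evec \<phi>) \<bullet> a = (evec \<phi> \<bullet> v) * (- (perp a \<bullet> v))"
proof (cases v; cases a)
  fix v1 v2 a1 a2 assume v: "v = (v1, v2)" and a: "a = (a1, a2)"
  have h1: "v1^2 + v2^2 = 1" using assms(1) v normP[of v1 v2] by simp
  have h2: "v1 * a1 + v2 * a2 = 0" using assms(2) v a by (simp add: inner_Pair)
  have "- sin \<phi> * a1 + cos \<phi> * a2 = (cos \<phi> * v1 + sin \<phi> * v2) * (- (- a2 * v1 + a1 * v2))"
    using h1 h2 by algebra
  thus ?thesis using v a by (simp add: perp_def evec_def inner_Pair)
qed

lemma at_right_eq: "0 < \<delta> \<Longrightarrow> at (0::real) within {0<..<\<delta>} = at_right 0"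
  by (rule at_within_nhd[of _ "{-\<delta><..<\<delta>}"]) auto

lemma at_left_eq: "0 < \<delta> \<Longrightarrow> at (0::real) within {-\<delta><..<0} = at_left 0"
  by (rule at_within_nhd[of _ "{-\<delta><..<\<delta>}"]) auto

lemma finish:
  fixes c w :: "real \<Rightarrow> real" and x' :: "real \<Rightarrow> real \<times> real"
  assumes "(w \<longlongrightarrow> \<sigma>) F" "\<sigma>^2 = 1" "\<And>s. x' s = c s *\<^sub>R e + w s *\<^sub>R f"
    "eventually (\<lambda>s. (c s)^2 = 1 - (w s)^2) F"
  shows "(c \<longlongrightarrow> 0) F" "(x' \<longlongrightarrow> \<sigma> *\<^sub>R f) F"
proof -
  have "((\<lambda>s. 1 - (w s)^2) \<longlongrightarrow> 1 - \<sigma>^2) F" by (intro tendsto_intros assms(1))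
  hence "((\<lambda>s. (c s)^2) \<longlongrightarrow> 0) F" using assms(2,4)
    by (simp add: tendsto_cong)
  hence "((\<lambda>s. sqrt ((c s)^2)) \<longlongrightarrow> sqrt 0) F" by (rule tendsto_real_sqrt)
  hence "((\<lambda>s. \<bar>c s\<bar>) \<longlongrightarrow> 0) F" by simp
  thus c: "(c \<longlongrightarrow> 0) F" by (rule tendsto_rabs_zero_cancel)
  have "((\<lambda>s. c s *\<^sub>R e + w s *\<^sub>R f) \<longlongrightarrow> 0 *\<^sub>R e + \<sigma> *\<^sub>R f) F"
    by (intro tendsto_intros c assms(1))
  moreover have "x' = (\<lambda>s. c s *\<^sub>R e + w s *\<^sub>R f)" using assms(3) by auto
  ultimately show "(x' \<longlongrightarrow> \<sigma> *\<^sub>R f) F" by simp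
qed



theorem proposition3p1:
  fixes t :: nat and J :: "int set" and phi :: "int \<Rightarrow> real" and nn :: "int \<Rightarrow> nat"
    and n :: nat and i :: int and H :: "real \<Rightarrow> real"
    and x x' x'' :: "real \<Rightarrow> real \<times> real" and I :: "real set" and \<delta> :: real
    and x0 :: "real \<times> real"
  assumes "type_data t J phi nn n"
    and "continuous_on UNIV H"
    and "admissible t J i"
    and "\<delta> > 0"
    and "I = {0<..<\<delta>} \<or> I = {-\<delta><..<0}"
    and "\<And>s. s \<in> I \<Longrightarrow> (x has_vector_derivative x' s) (at s)"
    and "\<And>s. s \<in> I \<Longrightarrow> (x' has_vector_derivative x'' s) (at s)"
    and "\<And>s. s \<in> I \<Longrightarrow>
           perp (x'' s) \<bullet> x' s
           + (\<Sum>j\<in>J. real (nn j) * (evec (phi j) \<bullet> x' s) / (perp (evec (phi j)) \<bullet> x s))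
           = (real n - 1) * H s"
    and "\<And>s. s \<in> I \<Longrightarrow> norm (x' s) ^ 2 = 1"
    and "\<And>s. s \<in> I \<Longrightarrow> x s \<in> sector t phi i"
    and "((\<lambda>s. perp (evec (phi i)) \<bullet> x s) \<longlongrightarrow> 0) (at 0 within I)"
    and "(x \<longlongrightarrow> x0) (at 0 within I)"
    and "x0 \<noteq> 0"
  shows "(\<exists>v. (x' \<longlongrightarrow> v) (at 0 within I)) \<and>
         ((\<lambda>s. evec (phi i) \<bullet> x' s) \<longlongrightarrow> 0) (at 0 within I)"
  proof -
  note A = assms
  have tf: "finite J \<and> i \<in> J \<and> nn i \<ge> 1 \<and> (\<forall>j\<in>J. j \<noteq> i \<longrightarrow> sin (phi i - phi j) \<noteq> 0)"
    by (rule types_facts[OF A(1) A(3)])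
  hence finJ: "finite J" and iJ: "i \<in> J" and nni: "nn i \<ge> 1"
    and sinne: "\<And>j. j \<in> J \<Longrightarrow> j \<noteq> i \<Longrightarrow> sin (phi i - phi j) \<noteq> 0" by auto
  define e where "e = evec (phi i)"
  define f where "f = perp e"
  define k where "k = real (nn i)"
  define u where "u s = f \<bullet> x s" for s
  define w where "w s = f \<bullet> x' s" for s
  define c where "c s = e \<bullet> x' s" for s
  define w2 where "w2 s = f \<bullet> x'' s" for s
  define g where "g s = (\<Sum>j\<in>J-{i}. real (nn j) * (evec (phi j) \<bullet> x' s) / (perp (evec (phi j)) \<bullet> x s))
      - (real n - 1) * H s" for s
  have k0: "k > 0" using nni unfolding k_def by simp
  have openI: "open I" using A(5) by auto
  have I0: "0 \<notin> I" using A(5) by auto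
  define F where "F = at (0::real) within I"
  have Feq: "F = at_right 0 \<or> F = at_left 0"
    using A(5) at_right_eq[OF A(4)] at_left_eq[OF A(4)] unfolding F_def by auto
  have Fnt: "F \<noteq> bot" using Feq by (metis trivial_limit_at_right_real trivial_limit_at_left_real)
  have du: "(u has_real_derivative w s) (at s)" if "s \<in> I" for s
    unfolding u_def w_def by (rule inner_vd[OF A(6)[OF that]])
  have dw: "(w has_real_derivative w2 s) (at s)" if "s \<in> I" for s
    unfolding w2_def w_def by (rule inner_vd[OF A(7)[OF that]])
  have orth: "x' s \<bullet> x'' s = 0" if s: "s \<in> I" for s
  proof -
    have d1: "((\<lambda>t. x' t \<bullet> x' t) has_real_derivative 2 * (x' s \<bullet> x'' s)) (at s)"
      by (rule self_inner_deriv[OF A(7)[OF s]])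
    have "((\<lambda>t. x' t \<bullet> x' t) has_real_derivative 0) (at s)"
    proof (rule has_field_derivative_transform_within_open[OF _ openI s])
      show "((\<lambda>_. 1) has_real_derivative 0) (at s)" by simp
      fix t assume "t \<in> I"
      thus "1 = x' t \<bullet> x' t" using A(9)[of t] by (simp add: power2_norm_eq_inner)
    qed
    with d1 have "2 * (x' s \<bullet> x'' s) = 0" by (rule DERIV_unique)
    thus ?thesis by simp
  qed
  have csq: "(c s)^2 = 1 - (w s)^2" if "s \<in> I" for s
    using normsq[of "phi i" "x' s"] A(9)[OF that] unfolding c_def w_def f_def e_def by simp
  have wb: "\<bar>w s\<bar> \<le> 1" if "s \<in> I" for s
  proof -
    have "(w s)^2 \<le> 1" using csq[OF that] zero_le_power2[of "c s"] by linarith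
    thus ?thesis by (simp add: abs_square_le_1)
  qed
  have cb: "\<bar>c s\<bar> \<le> 1" if "s \<in> I" for s
  proof -
    have "(c s)^2 \<le> 1" using csq[OF that] zero_le_power2[of "w s"] by linarith
    thus ?thesis by (simp add: abs_square_le_1)
  qed
  have eqn: "- (perp (x'' s) \<bullet> x' s) = k * c s / u s + g s" if s: "s \<in> I" for s
  proof -
    have "(\<Sum>j\<in>J. real (nn j) * (evec (phi j) \<bullet> x' s) / (perp (evec (phi j)) \<bullet> x s))
       = real (nn i) * (evec (phi i) \<bullet> x' s) / (perp (evec (phi i)) \<bullet> x s)
         + (\<Sum>j\<in>J-{i}. real (nn j) * (evec (phi j) \<bullet> x' s) / (perp (evec (phi j)) \<bullet> x s))"
      by (rule sum.remove[OF finJ iJ])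
    also have "real (nn i) * (evec (phi i) \<bullet> x' s) / (perp (evec (phi i)) \<bullet> x s) = k * c s / u s"
      unfolding k_def c_def u_def f_def e_def ..
    finally show ?thesis using A(8)[OF s] unfolding g_def by linarith
  qed
  have w2eq: "w2 s = k * (c s)^2 / u s + c s * g s" if s: "s \<in> I" for s
  proof -
    have "w2 s = c s * (- (perp (x'' s) \<bullet> x' s))"
      unfolding w2_def c_def f_def e_def
      by (rule key_identity) (use A(9)[OF s] orth[OF s] in auto)
    also have "\<dots> = c s * (k * c s / u s + g s)" using eqn[OF s] by simp
    finally show ?thesis by (simp add: power2_eq_square algebra_simps)
  qed
  have upos: "u s > 0" if s: "s \<in> I" for s
  proof (cases "t = 1")
    case True
    hence "i = 0" using A(3) unfolding admissible_def by simp
    moreover have "phi 0 = 0" using A(1) True unfolding type_data_def by auto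
    ultimately have "f = (0,1)" unfolding f_def e_def perp_def evec_def by simp
    moreover have "snd (x s) > 0" using A(10)[OF s] True unfolding sector_def by simp
    ultimately show ?thesis unfolding u_def by (cases "x s") (simp add: inner_Pair)
  next
    case False
    thus ?thesis using A(10)[OF s] unfolding sector_def u_def f_def e_def by simp
  qed
  have xlim: "(x \<longlongrightarrow> x0) F" using A(12) unfolding F_def .
  have ulim: "(u \<longlongrightarrow> 0) F" using A(11) unfolding F_def u_def f_def e_def .
  have fx0: "f \<bullet> x0 = 0"
  proof -
    have "(u \<longlongrightarrow> f \<bullet> x0) F" unfolding u_def by (intro tendsto_intros xlim)
    thus ?thesis using tendsto_unique[OF Fnt ulim] by simp
  qed
  have ex0: "e \<bullet> x0 \<noteq> 0"
  proof
    assume "e \<bullet> x0 = 0"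
    hence "x0 = 0" using decomp[of x0 "phi i"] fx0 unfolding f_def e_def by simp
    thus False using A(13) by simp
  qed
  have fjx0: "perp (evec (phi j)) \<bullet> x0 \<noteq> 0" if "j \<in> J" "j \<noteq> i" for j
  proof -
    have "x0 = (e \<bullet> x0) *\<^sub>R e" using decomp[of x0 "phi i"] fx0 unfolding f_def e_def by simp
    hence "perp (evec (phi j)) \<bullet> x0 = (e \<bullet> x0) * sin (phi i - phi j)"
      by (metis inner_scaleR_right perp_evec_inner e_def)
    thus ?thesis using ex0 sinne[OF that] by simp
  qed
  define B where "B j = \<bar>perp (evec (phi j)) \<bullet> x0\<bar>" for j
  have B0: "B j > 0" if "j \<in> J-{i}" for j using fjx0 that unfolding B_def by auto
  define M where "M = (\<Sum>j\<in>J-{i}. real (nn j) * (2 / B j)) + \<bar>real n - 1\<bar> * (\<bar>H 0\<bar> + 1)"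
  have M0: "M \<ge> 0" unfolding M_def using B0
    by (intro add_nonneg_nonneg sum_nonneg mult_nonneg_nonneg) (auto simp: less_imp_le)
  have ev1: "eventually (\<lambda>s. \<forall>j\<in>J-{i}. B j / 2 < \<bar>perp (evec (phi j)) \<bullet> x s\<bar>) F"
  proof (rule eventually_ball_finite)
    show "finite (J - {i})" using finJ by simp
    show "\<forall>j\<in>J - {i}. \<forall>\<^sub>F s in F. B j / 2 < \<bar>perp (evec (phi j)) \<bullet> x s\<bar>"
    proof
      fix j assume j: "j \<in> J - {i}"
      have "((\<lambda>s. \<bar>perp (evec (phi j)) \<bullet> x s\<bar>) \<longlongrightarrow> B j) F"
        unfolding B_def by (intro tendsto_intros xlim)
      moreover have "B j / 2 < B j" using B0[OF j] by simp
      ultimately show "\<forall>\<^sub>F s in F. B j / 2 < \<bar>perp (evec (phi j)) \<bullet> x s\<bar>"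
        by (rule order_tendstoD(1))
    qed
  qed
  have ev2: "eventually (\<lambda>s. \<bar>H s\<bar> < \<bar>H 0\<bar> + 1) F"
  proof -
    have "isCont H 0" using A(2) by (simp add: continuous_on_eq_continuous_at)
    hence "(H \<longlongrightarrow> H 0) F" unfolding F_def isCont_def by (rule tendsto_mono[OF at_le, rotated]) simp
    hence "((\<lambda>s. \<bar>H s\<bar>) \<longlongrightarrow> \<bar>H 0\<bar>) F" by (rule tendsto_rabs)
    thus ?thesis by (rule order_tendstoD(2)) simp
  qed
  have gbound: "\<bar>g s\<bar> \<le> M" if s: "s \<in> I"
     and h1: "\<forall>j\<in>J-{i}. B j / 2 < \<bar>perp (evec (phi j)) \<bullet> x s\<bar>" and h2: "\<bar>H s\<bar> < \<bar>H 0\<bar> + 1" for s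
  proof -
    have trm: "\<bar>real (nn j) * (evec (phi j) \<bullet> x' s) / (perp (evec (phi j)) \<bullet> x s)\<bar> \<le> real (nn j) * (2 / B j)"
      if j: "j \<in> J-{i}" for j
    proof -
      have n1: "\<bar>evec (phi j) \<bullet> x' s\<bar> \<le> 1"
      proof -
        have "norm (x' s) = 1" using A(9)[OF s] norm_ge_zero[of "x' s"] by (auto simp: power2_eq_1_iff)
        thus ?thesis using inner_bound[of "phi j" "x' s"] by simp
      qed
      have b: "B j / 2 < \<bar>perp (evec (phi j)) \<bullet> x s\<bar>" using h1 j by auto
      have "\<bar>real (nn j) * (evec (phi j) \<bullet> x' s) / (perp (evec (phi j)) \<bullet> x s)\<bar>
          = real (nn j) * \<bar>evec (phi j) \<bullet> x' s\<bar> / \<bar>perp (evec (phi j)) \<bullet> x s\<bar>"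
        by (simp add: abs_mult)
      also have "\<dots> \<le> real (nn j) / (B j / 2)"
        using n1 b B0[OF j] by (intro frac_le) (auto intro: mult_left_le)
      also have "\<dots> = real (nn j) * (2 / B j)" by simp
      finally show ?thesis .
    qed
    have "\<bar>g s\<bar> \<le> \<bar>\<Sum>j\<in>J-{i}. real (nn j) * (evec (phi j) \<bullet> x' s) / (perp (evec (phi j)) \<bullet> x s)\<bar>
        + \<bar>(real n - 1) * H s\<bar>" unfolding g_def by (rule abs_triangle_ineq4)
    also have "\<dots> \<le> (\<Sum>j\<in>J-{i}. real (nn j) * (2 / B j)) + \<bar>real n - 1\<bar> * (\<bar>H 0\<bar> + 1)"
    proof (rule add_mono)
      show "\<bar>\<Sum>j\<in>J-{i}. real (nn j) * (evec (phi j) \<bullet> x' s) / (perp (evec (phi j)) \<bullet> x s)\<bar>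
          \<le> (\<Sum>j\<in>J-{i}. real (nn j) * (2 / B j))"
        by (rule order_trans[OF sum_abs sum_mono]) (rule trm)
      show "\<bar>(real n - 1) * H s\<bar> \<le> \<bar>real n - 1\<bar> * (\<bar>H 0\<bar> + 1)"
        using h2 by (simp add: abs_mult mult_left_mono)
    qed
    finally show ?thesis unfolding M_def .
  qed
  have "eventually (\<lambda>s. \<bar>g s\<bar> \<le> M) F"
  proof -
    have "eventually (\<lambda>s. s \<in> I) F" unfolding F_def by (simp add: eventually_at_filter)
    with ev1 ev2 show ?thesis
    proof eventually_elim
      case (elim s) thus ?case using gbound by blast
    qed
  qed
  then obtain d where d0: "d > 0" and gd0: "\<forall>s\<in>I. s \<noteq> 0 \<and> \<bar>s\<bar> < d \<longrightarrow> \<bar>g s\<bar> \<le> M"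
    unfolding F_def eventually_at by auto
  have gd: "\<And>s. s \<in> I \<Longrightarrow> \<bar>s\<bar> < d \<Longrightarrow> \<bar>g s\<bar> \<le> M" using gd0 I0 by fastforce
  have ineq: "w2 s \<ge> k * (1 - (w s)^2) / u s - M" if s: "s \<in> I" and sd: "\<bar>s\<bar> < d" for s
  proof -
    have "\<bar>c s * g s\<bar> \<le> 1 * M" unfolding abs_mult
      using cb[OF s] gd[OF s] sd M0 by (intro mult_mono) auto
    hence "c s * g s \<ge> - M" by linarith
    thus ?thesis using w2eq[OF s] csq[OF s] by simp
  qed
  have dec: "\<And>s. x' s = c s *\<^sub>R e + w s *\<^sub>R f"
    unfolding c_def w_def f_def e_def by (rule decomp)
  have evc: "eventually (\<lambda>s. (c s)^2 = 1 - (w s)^2) F"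
    unfolding F_def eventually_at_filter using csq by simp
  define \<delta>1 where "\<delta>1 = min \<delta> d"
  have d1: "\<delta>1 > 0" using A(4) d0 unfolding \<delta>1_def by simp
  from A(5) show ?thesis
  proof
    assume I: "I = {0<..<\<delta>}"
    have FR: "F = at_right 0" unfolding F_def I by (rule at_right_eq[OF A(4)])
    have sI: "s \<in> I" "\<bar>s\<bar> < d" if "0 < s" "s < \<delta>1" for s
      using that unfolding I \<delta>1_def by auto
    have low: "w s \<ge> 1 - M * s" if "0 < s" "s < \<delta>1" for s
      apply (rule core_lemma[where u=u and w=w and w'=w2 and k=k and M=M and \<delta>=\<delta>1])
      using d1 k0 M0 du dw upos wb ineq sI ulim FR that by auto
    have "(w \<longlongrightarrow> 1) F"
    proof (rule tendsto_sandwich[where f="\<lambda>s. 1 - M * s" and h="\<lambda>_. 1"])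
      show "eventually (\<lambda>s. 1 - M * s \<le> w s) F" unfolding FR eventually_at_right_field
        using low d1 by blast
      show "eventually (\<lambda>s. w s \<le> 1) F" unfolding FR eventually_at_right_field
        using wb sI d1 by (metis abs_le_D1)
      show "((\<lambda>s. 1 - M * s) \<longlongrightarrow> 1) F" unfolding FR
        by (auto intro!: tendsto_eq_intros)
    qed simp
    from finish[OF this _ dec evc] have r: "(c \<longlongrightarrow> 0) F" "(x' \<longlongrightarrow> 1 *\<^sub>R f) F" by auto
    show ?thesis
    proof (intro conjI)
      show "\<exists>v. (x' \<longlongrightarrow> v) (at 0 within I)" using r(2) unfolding F_def by blast
      show "((\<lambda>s. evec (phi i) \<bullet> x' s) \<longlongrightarrow> 0) (at 0 within I)" using r(1) unfolding F_def c_def e_def .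
    qed
  next
    assume I: "I = {-\<delta><..<0}"
    have FL: "F = at_left 0" unfolding F_def I by (rule at_left_eq[OF A(4)])
    have sI: "- s \<in> I" "\<bar>- s\<bar> < d" if "0 < s" "s < \<delta>1" for s
      using that unfolding I \<delta>1_def by auto
    have ulimR: "((\<lambda>s. u (- s)) \<longlongrightarrow> 0) (at_right 0)"
      using ulim unfolding FL filterlim_at_left_to_right by simp
    have low: "- w (- s) \<ge> 1 - M * s" if "0 < s" "s < \<delta>1" for s
    proof (rule core_lemma[where u="\<lambda>s. u (- s)" and w="\<lambda>s. - w (- s)" and w'="\<lambda>s. w2 (- s)"
          and k=k and M=M and \<delta>=\<delta>1])
      fix s assume s: "0 < s" "s < \<delta>1"
      show "((\<lambda>s. u (- s)) has_real_derivative - w (- s)) (at s)"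
        using DERIV_mirror[where f=u and x=s and y="w (- s)"] du[OF sI(1)[OF s]] by simp
      have "((\<lambda>s. w (- s)) has_real_derivative - w2 (- s)) (at s)"
        using DERIV_mirror[where f=w and x=s and y="w2 (- s)"] dw[OF sI(1)[OF s]] by simp
      thus "((\<lambda>s. - w (- s)) has_real_derivative w2 (- s)) (at s)"
        using DERIV_minus by fastforce
      show "u (- s) > 0" using upos sI s by auto
      show "\<bar>- w (- s)\<bar> \<le> 1" using wb sI s by auto
      show "w2 (- s) \<ge> k * (1 - (- w (- s))^2) / u (- s) - M" using ineq sI s by auto
    qed (use d1 k0 M0 ulimR that in auto)
    have "(w \<longlongrightarrow> -1) F"
    proof (rule tendsto_sandwich[where f="\<lambda>_. -1" and h="\<lambda>s. -1 - M * s"])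
      show "eventually (\<lambda>s. w s \<le> -1 - M * s) F" unfolding FL eventually_at_left_field
      proof (intro exI[of _ "-\<delta>1"] conjI allI impI)
        show "-\<delta>1 < 0" using d1 by simp
        fix y :: real assume "-\<delta>1 < y" "y < 0"
        thus "w y \<le> -1 - M * y" using low[of "-y"] by auto
      qed
      show "eventually (\<lambda>s. -1 \<le> w s) F" unfolding FL eventually_at_left_field
      proof (intro exI[of _ "-\<delta>1"] conjI allI impI)
        show "-\<delta>1 < 0" using d1 by simp
        fix y :: real assume "-\<delta>1 < y" "y < 0"
        thus "-1 \<le> w y" using wb[of y] sI[of "-y"] by auto
      qed
      show "((\<lambda>s. -1 - M * s) \<longlongrightarrow> -1) F" unfolding FL
        by (auto intro!: tendsto_eq_intros)
    qed simp
    from finish[OF this _ dec evc] have r: "(c \<longlongrightarrow> 0) F" "(x' \<longlongrightarrow> (-1) *\<^sub>R f) F" by auto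
    show ?thesis
    proof (intro conjI)
      show "\<exists>v. (x' \<longlongrightarrow> v) (at 0 within I)" using r(2) unfolding F_def by blast
      show "((\<lambda>s. evec (phi i) \<bullet> x' s) \<longlongrightarrow> 0) (at 0 within I)" using r(1) unfolding F_def c_def e_def .
    qed
  qed
qed

end
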